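(* For complex numbers $x,y$ with $y\neq 0$, define \[ A(x,y)=\sum_{n=0}^{\infty} x^n\binom{2n}{n}\sum_{k=0}^n\binom{n}{k}^2\binom{2k}{n}(-1)^k y^{2k-n}. \] If $x$ and $y$ are such that this double series converges absolutely, then \[ A(x,y)=\sum_{k=0}^{\infty}(-xy)^k\binom{2k}{k}^2 P_{2k}\!\left(\sqrt{1+\frac{4x}{y}}\right), \] where $P_m$ denotes the $m$-th Legendre polynomial.
   Context: $\binom{2k}{n}=0$ for $n>2k$. Since $P_{2k}$ is an even polynomial, the choice of square root is immaterial. *)

theory Defs
  imports "HOL-Analysis.Analysis"
begin

definition legendreP :: "nat \<Rightarrow> complex \<Rightarrow> complex" where
  "legendreP m z = (\<Sum>j\<le>m div 2. (-1)^j * of_nat (m choose j) * of_nat ((2*m - 2*j) choose m)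
                         * z ^ (m - 2*j)) / 2 ^ m"

definition A_term :: "complex \<Rightarrow> complex \<Rightarrow> nat \<Rightarrow> nat \<Rightarrow> complex" where
  "A_term x y n k = x ^ n * of_nat ((2*n) choose n) * of_nat ((n choose k)^2) * of_nat ((2*k) choose n)
                      * (-1)^k * y powi (2 * int k - int n)"

definition A_fun :: "complex \<Rightarrow> complex \<Rightarrow> complex" where
  "A_fun x y = (\<Sum>n. \<Sum>k\<le>n. A_term x y n k)"

end

theory Submission
  imports Defs
begin

lemma L1: "Suc i * (p choose Suc i) = (p - i) * (p choose i)"
proof (cases p)
  case 0 then show ?thesis by simp
next
  case (Suc q)
  have "Suc i * (Suc q choose Suc i) = Suc q * (q choose i)" by (rule Suc_times_binomial)
  moreover have "(Suc q - i) * (Suc q choose i) = Suc q * ((Suc q - 1) choose i)" by (rule binomial_absorb_comp)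
  ultimately show ?thesis using Suc by simp
qed

lemma termid:
  "4*(of_nat i+1)^2 * (of_nat (p choose Suc i)::complex) + 2* of_nat p*(2* of_nat p - 1)* of_nat ((p-1) choose i)
   = 2*(of_nat p - of_nat i)*(2* of_nat p + 2* of_nat i+1)* of_nat (p choose i)"
proof (cases "i \<le> p")
  case False
  then show ?thesis by (simp add: binomial_eq_0)
next
  case True
  have h1: "(of_nat i + 1) * (of_nat (p choose Suc i)::complex) = (of_nat p - of_nat i) * of_nat (p choose i)"
    using arg_cong[OF L1[of i p], of "of_nat :: nat \<Rightarrow> complex"] True by (simp add: of_nat_diff algebra_simps)
  have h2: "(of_nat p) * (of_nat ((p-1) choose i)::complex) = (of_nat p - of_nat i) * of_nat (p choose i)"
    using arg_cong[OF binomial_absorb_comp[of p i], of "of_nat :: nat \<Rightarrow> complex"] True by (simp add: of_nat_diff)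
  have "4*(of_nat i+1)^2 * (of_nat (p choose Suc i)::complex) + 2* of_nat p*(2* of_nat p - 1)* of_nat ((p-1) choose i)
     = 4*(of_nat i+1)*((of_nat i + 1) * (of_nat (p choose Suc i))) + 2*(2* of_nat p - 1)*((of_nat p) * (of_nat ((p-1) choose i)))"
    by (simp add: power2_eq_square algebra_simps)
  also have "\<dots> = 2*(of_nat p - of_nat i)*(2* of_nat p + 2* of_nat i+1)* of_nat (p choose i)"
    unfolding h1 h2 by (simp add: algebra_simps)
  finally show ?thesis .
qed

definition bb :: "nat \<Rightarrow> nat \<Rightarrow> complex" where
  "bb k j = (-1)^j * of_nat ((2*k) choose j) * of_nat ((2*(2*k) - 2*j) choose (2*k))"

lemma bnat:
  assumes "j < k"
  shows "((2*k) choose Suc j) * Suc j * ((2*(2*k) - 2*Suc j) choose (2*k)) * (4*k - 2*j - 1)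
       = ((2*k) choose j) * (k - j) * (2*k - 2*j - 1) * ((2*(2*k) - 2*j) choose (2*k))"
proof -
  obtain d where "k = Suc (j + d)" using less_imp_Suc_add[OF assms] by blast
  hence k: "k = j + Suc d" by simp
  have e1: "((2*k) choose Suc j) * Suc j = ((2*k) choose j) * (2*k - j)"
    using L1[of j "2*k"] by (simp add: mult.commute)
  define M where "M = 2*j + 4 + 4*d"
  have a1: "(M - 2*k) * (M choose (2*k)) = M * ((M - 1) choose (2*k))" by (rule binomial_absorb_comp)
  have a2: "(M - 1 - 2*k) * ((M-1) choose (2*k)) = (M-1) * ((M - 1 - 1) choose (2*k))" by (rule binomial_absorb_comp)
  have "(M - 2*k) * (M - 1 - 2*k) * (M choose (2*k)) = M * (M-1) * ((M - 2) choose (2*k))"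
  proof -
    have "(M - 2*k) * (M - 1 - 2*k) * (M choose (2*k)) = (M - 1 - 2*k) * ((M - 2*k) * (M choose (2*k)))"
      by (simp only: mult_ac)
    also have "\<dots> = M * ((M - 1 - 2*k) * ((M - 1) choose (2*k)))" unfolding a1 by (simp only: mult_ac)
    also have "\<dots> = M * (M-1) * ((M - 2) choose (2*k))" unfolding a2 by (simp add: numeral_2_eq_2 mult.assoc)
    finally show ?thesis .
  qed
  hence P: "(M - 2*k) * (M - 1 - 2*k) * (M choose (2*k)) = M * (M-1) * ((M - 2) choose (2*k))" .
  define cM where "cM = M choose (2*k)"
  define cM2 where "cM2 = (M - 2) choose (2*k)"
  define cA where "cA = (2*k) choose j"
  have h1: "M - 2*k = 2*d+2" unfolding M_def k by simp
  have h3: "M - 1 = 2*j+3+4*d" unfolding M_def by simp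
  have h2: "2*j+3+4*d - 2*k = 2*d+1" unfolding k by simp
  have P2: "(2*d+2) * (2*d+1) * cM = M * (2*j+3+4*d) * cM2"
    using P unfolding cM_def[symmetric] cM2_def[symmetric] h1 h3 h2 .
  have hM: "M = 2 * (j+2+2*d)" unfolding M_def by simp
  have q1: "(2*d+2) * (2*d+1) * cM = 2 * ((d+1) * (2*d+1) * cM)"
  proof -
    have "2*d+2 = 2*(d+1)" by simp
    thus ?thesis by (simp only: mult_ac)
  qed
  have q2: "M * (2*j+3+4*d) * cM2 = 2 * ((j+2+2*d) * (2*j+3+4*d) * cM2)" unfolding hM by (simp only: mult_ac)
  have "2 * ((d+1) * (2*d+1) * cM) = 2 * ((j+2+2*d) * (2*j+3+4*d) * cM2)"
    using P2 unfolding q1 q2 .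
  hence e2: "(d+1) * (2*d+1) * cM = (j+2+2*d) * (2*j+3+4*d) * cM2" by simp
  have m1: "2*(2*k) - 2*Suc j = M - 2" and m2: "2*(2*k) - 2*j = M" unfolding M_def k by simp_all
  have n1: "2*k - j = j+2+2*d" "4*k-2*j-1 = 2*j+3+4*d" "k-j = d+1" "2*k-2*j-1 = 2*d+1" unfolding k by simp_all
  have "cA * (j+2+2*d) * cM2 * (2*j+3+4*d) = cA * ((j+2+2*d) * (2*j+3+4*d) * cM2)" by (simp only: mult_ac)
  also have "\<dots> = cA * ((d+1) * (2*d+1) * cM)" unfolding e2 ..
  also have "\<dots> = cA * (d+1) * (2*d+1) * cM" by (simp only: mult_ac)
  finally have "cA * (j+2+2*d) * cM2 * (2*j+3+4*d) = cA * (d+1) * (2*d+1) * cM" .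
  thus ?thesis unfolding e1 m1 m2 n1 cM_def[symmetric] cM2_def[symmetric] cA_def[symmetric] .
qed

lemma brec:
  assumes "j < k"
  shows "bb k (Suc j) * (of_nat j + 1) * (4 * of_nat k - 2 * of_nat j - 1)
       = - bb k j * (of_nat k - of_nat j) * (2 * of_nat k - 2 * of_nat j - 1)"
proof -
  have c: "(of_nat (((2*k) choose Suc j) * Suc j * ((2*(2*k) - 2*Suc j) choose (2*k)) * (4*k - 2*j - 1)) :: complex)
       = of_nat (((2*k) choose j) * (k - j) * (2*k - 2*j - 1) * ((2*(2*k) - 2*j) choose (2*k)))"
    using bnat[OF assms] by simp
  have d1: "(of_nat (4*k - 2*j - 1)::complex) = 4 * of_nat k - 2 * of_nat j - 1"
    using assms by (simp add: of_nat_diff)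
  have d2: "(of_nat (2*k - 2*j - 1)::complex) = 2 * of_nat k - 2 * of_nat j - 1"
    using assms by (simp add: of_nat_diff)
  have d3: "(of_nat (k - j)::complex) = of_nat k - of_nat j"
    using assms by (simp add: of_nat_diff)
  define X where "X = (of_nat ((2*k) choose Suc j) :: complex)"
  define Y where "Y = (of_nat ((2*(2*k) - 2*Suc j) choose (2*k)) :: complex)"
  define Z where "Z = (of_nat ((2*k) choose j) :: complex)"
  define W where "W = (of_nat ((2*(2*k) - 2*j) choose (2*k)) :: complex)"
  from c have c2: "X * (of_nat j + 1) * Y * (4 * of_nat k - 2 * of_nat j - 1)
       = Z * (of_nat k - of_nat j) * (2 * of_nat k - 2 * of_nat j - 1) * W"
    unfolding X_def Y_def Z_def W_def of_nat_mult d1 d2 d3 by (simp only: of_nat_Suc add.commute)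
  have b1: "bb k (Suc j) = - ((-1)^j * X * Y)" unfolding bb_def X_def Y_def by simp
  have b0: "bb k j = (-1)^j * Z * W" unfolding bb_def Z_def W_def by simp
  have "bb k (Suc j) * (of_nat j + 1) * (4 * of_nat k - 2 * of_nat j - 1)
     = - ((-1)^j * (X * (of_nat j + 1) * Y * (4 * of_nat k - 2 * of_nat j - 1)))"
    unfolding b1 by (simp add: algebra_simps)
  also have "\<dots> = - ((-1)^j * (Z * (of_nat k - of_nat j) * (2 * of_nat k - 2 * of_nat j - 1) * W))"
    unfolding c2 ..
  also have "\<dots> = - bb k j * (of_nat k - of_nat j) * (2 * of_nat k - 2 * of_nat j - 1)"
    unfolding b0 by (simp add: algebra_simps)
  finally show ?thesis .
qed

lemma aux_tele:
  fixes B1 B0 j1 q r s C :: complex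
  assumes "B1 * j1 * q = - B0 * r * s"
  shows "B1 * (2 * j1 * q) * C = - (B0 * (2 * r * s) * C)"
proof -
  have "B1 * (2 * j1 * q) * C = 2 * C * (B1 * j1 * q)" by (simp only: mult_ac)
  also have "\<dots> = 2 * C * (- B0 * r * s)" unfolding assms ..
  also have "\<dots> = - (B0 * (2 * r * s) * C)" by (simp add: algebra_simps)
  finally show ?thesis .
qed

definition SS :: "nat \<Rightarrow> nat \<Rightarrow> complex" where
  "SS k i = (\<Sum>j\<le>k. bb k j * of_nat ((k - j) choose i))"

lemma tele:
  "(\<Sum>j\<le>k. bb k j * (2 * of_nat j * (4 * of_nat k - 2 * of_nat j + 1)) * of_nat ((k-j) choose i)
        + bb k j * (2 * of_nat (k-j) * (2 * of_nat (k-j) - 1)) * of_nat ((k-j-1) choose i)) = 0"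
  (is "(\<Sum>j\<le>k. ?U j + ?T j) = 0")
proof (cases k)
  case 0 then show ?thesis by simp
next
  case (Suc k')
  have "(\<Sum>j\<le>k. ?U j + ?T j) = (\<Sum>j\<le>k. ?U j) + (\<Sum>j\<le>k. ?T j)" by (rule sum.distrib)
  also have "(\<Sum>j\<le>k. ?U j) = ?U 0 + (\<Sum>j\<le>k'. ?U (Suc j))" unfolding Suc by (rule sum.atMost_Suc_shift)
  also have "(\<Sum>j\<le>k. ?T j) = (\<Sum>j\<le>k'. ?T j) + ?T (Suc k')" unfolding Suc by (rule sum.atMost_Suc)
  also have "(\<Sum>j\<le>k'. ?U (Suc j)) = (\<Sum>j\<le>k'. - ?T j)"
  proof (rule sum.cong[OF refl])
    fix j assume "j \<in> {..k'}"
    hence jk: "j < k" using Suc by simp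
    have e: "(of_nat (k - j)::complex) = of_nat k - of_nat j" using jk by (simp add: of_nat_diff)
    have e2: "k - Suc j = k - j - 1" by simp
    have f1: "(of_nat (Suc j) :: complex) = of_nat j + 1" by simp
    have f2: "4 * of_nat k - 2 * (of_nat j + 1) + 1 = (4 * of_nat k - 2 * of_nat j - 1 :: complex)" by simp
    have f3: "2 * (of_nat k - of_nat j) - 1 = (2 * of_nat k - 2 * of_nat j - 1 :: complex)" by simp
    show "?U (Suc j) = - ?T j"
      unfolding f1 f2 e e2 f3 by (rule aux_tele[OF brec[OF jk]])
  qed
  finally show ?thesis using Suc by (simp add: sum_negf)
qed

lemma SSrec:
  "4 * (of_nat i + 1)^2 * SS k (Suc i) = (2 * of_nat k - 2 * of_nat i) * (2 * of_nat k + 2 * of_nat i + 1) * SS k i"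
proof -
  let ?U = "\<lambda>j. bb k j * (2 * of_nat j * (4 * of_nat k - 2 * of_nat j + 1)) * of_nat ((k-j) choose i)"
  let ?T = "\<lambda>j. bb k j * (2 * of_nat (k-j) * (2 * of_nat (k-j) - 1)) * of_nat ((k-j-1) choose i)"
  have pt: "bb k j * (4 * (of_nat i + 1)^2 * of_nat ((k-j) choose Suc i)) =
     bb k j * ((2 * of_nat k - 2 * of_nat i) * (2 * of_nat k + 2 * of_nat i + 1)) * of_nat ((k-j) choose i) - (?U j + ?T j)"
    if "j \<in> {..k}" for j
  proof -
    have jk: "j \<le> k" using that by simp
    have e: "(of_nat (k - j)::complex) = of_nat k - of_nat j" using jk by (simp add: of_nat_diff)
    have t: "4*(of_nat i+1)^2 * (of_nat ((k-j) choose Suc i)::complex) = 2*(of_nat (k-j) - of_nat i)*(2* of_nat (k-j) + 2* of_nat i+1)* of_nat ((k-j) choose i) - 2* of_nat (k-j)*(2* of_nat (k-j) - 1)* of_nat ((k-j-1) choose i)"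
      using termid[of i "k-j"] by (simp add: algebra_simps)
    show ?thesis unfolding t unfolding e by (simp add: algebra_simps)
  qed
  have "4 * (of_nat i + 1)^2 * SS k (Suc i) = (\<Sum>j\<le>k. bb k j * (4 * (of_nat i + 1)^2 * of_nat ((k-j) choose Suc i)))"
    unfolding SS_def by (simp add: sum_distrib_left algebra_simps)
  also have "\<dots> = (\<Sum>j\<le>k. bb k j * ((2 * of_nat k - 2 * of_nat i) * (2 * of_nat k + 2 * of_nat i + 1)) * of_nat ((k-j) choose i)) - (\<Sum>j\<le>k. ?U j + ?T j)"
    using pt by (simp add: sum_subtractf)
  also have "(\<Sum>j\<le>k. ?U j + ?T j) = 0" by (rule tele)
  also have "(\<Sum>j\<le>k. bb k j * ((2 * of_nat k - 2 * of_nat i) * (2 * of_nat k + 2 * of_nat i + 1)) * of_nat ((k-j) choose i))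
     = (2 * of_nat k - 2 * of_nat i) * (2 * of_nat k + 2 * of_nat i + 1) * SS k i"
    unfolding SS_def sum_distrib_left by (intro sum.cong refl) (simp add: algebra_simps)
  finally show ?thesis by simp
qed

definition aa :: "nat \<Rightarrow> nat \<Rightarrow> complex" where
  "aa k n = of_nat ((2*n) choose n) * of_nat ((n choose k)^2) * of_nat ((2*k) choose n)"

lemma F1: "Suc n * ((2*Suc n) choose Suc n) = 2*(2*n+1)*((2*n) choose n)"
proof -
  define c0 where "c0 = (2*n) choose n"
  define c1 where "c1 = (2*n+1) choose n"
  define c2 where "c2 = (2*Suc n) choose Suc n"
  have e3: "2*Suc n = Suc (2*n+1)" by simp
  have a: "Suc n * c2 = Suc (2*n+1) * c1" unfolding c2_def c1_def e3 by (rule Suc_times_binomial)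
  have b: "(2*n+1 - n) * ((2*n+1) choose n) = (2*n+1) * ((2*n+1 - 1) choose n)" by (rule binomial_absorb_comp)
  have e1: "2*n+1-n = Suc n" by simp
  have e2: "2*n+1-1 = 2*n" by simp
  have b': "Suc n * c1 = (2*n+1) * c0" using b unfolding e1 e2 c1_def c0_def .
  have "Suc n * (Suc n * c2) = Suc n * (2*(2*n+1)*c0)"
  proof -
    have "Suc n * (Suc n * c2) = Suc n * (Suc (2*n+1) * c1)" unfolding a ..
    also have "\<dots> = Suc (2*n+1) * (Suc n * c1)" by (simp only: mult_ac)
    also have "\<dots> = Suc (2*n+1) * ((2*n+1) * c0)" unfolding b' ..
    also have "\<dots> = Suc n * (2*(2*n+1)*c0)" by (simp add: algebra_simps)
    finally show ?thesis .
  qed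
  hence "Suc n * c2 = 2*(2*n+1)*c0" by (subst (asm) mult_left_cancel) simp_all
  thus ?thesis unfolding c2_def c0_def .
qed

lemma arec:
  assumes "i < k"
  shows "(of_nat i + 1)^2 * aa k (Suc (k+i)) = (2 * of_nat k - 2 * of_nat i) * (2 * of_nat k + 2 * of_nat i + 1) * aa k (k+i)"
proof -
  define n where "n = k + i"
  define A where "A = (of_nat ((2*n) choose n) :: complex)"
  define A2 where "A2 = (of_nat ((2*Suc n) choose Suc n) :: complex)"
  define B where "B = (of_nat (n choose k) :: complex)"
  define B2 where "B2 = (of_nat (Suc n choose k) :: complex)"
  define D where "D = (of_nat ((2*k) choose n) :: complex)"
  define D2 where "D2 = (of_nat ((2*k) choose Suc n) :: complex)"
  have f1: "(of_nat n + 1) * A2 = 2*(2 * of_nat n+1) * A"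
    using arg_cong[OF F1[of n], of "of_nat :: nat \<Rightarrow> complex"] unfolding A_def A2_def
    by (simp only: of_nat_mult of_nat_add of_nat_numeral of_nat_1 of_nat_Suc add.commute)
  have f2n: "Suc i * (Suc n choose k) = Suc n * (n choose k)"
    using binomial_absorb_comp[of "Suc n" k] unfolding n_def by (simp add: Suc_diff_le)
  have f2: "(of_nat i + 1) * B2 = (of_nat n + 1) * B"
    using arg_cong[OF f2n, of "of_nat :: nat \<Rightarrow> complex"] unfolding B_def B2_def
    by (simp only: of_nat_mult of_nat_Suc add.commute)
  have f3: "(of_nat n + 1) * D2 = (of_nat k - of_nat i) * D"
  proof -
    have "of_nat (Suc n * ((2*k) choose Suc n)) = (of_nat ((2*k - n) * ((2*k) choose n)) :: complex)"
      using L1[of n "2*k"] by simp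
    moreover have "(of_nat (2*k - n) :: complex) = of_nat k - of_nat i" using assms unfolding n_def by (simp add: of_nat_diff)
    ultimately show ?thesis unfolding D_def D2_def by (simp only: of_nat_mult of_nat_Suc add.commute)
  qed
  have aS: "aa k (Suc n) = A2 * B2^2 * D2" unfolding aa_def A2_def B2_def D2_def by (simp only: of_nat_power)
  have a0: "aa k n = A * B^2 * D" unfolding aa_def A_def B_def D_def by (simp only: of_nat_power)
  have nn: "(of_nat n :: complex) = of_nat k + of_nat i" unfolding n_def by simp
  have nz: "(of_nat n + 1 :: complex)^2 \<noteq> 0"
    by (metis of_nat_Suc of_nat_eq_0_iff add.commute nat.distinct(1) power_not_zero zero_power2)
  have "(of_nat n + 1)^2 * ((of_nat i + 1)^2 * aa k (Suc n)) =
     ((of_nat n + 1) * A2) * ((of_nat i + 1) * B2)^2 * ((of_nat n + 1) * D2)"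
    unfolding aS by (simp only: power2_eq_square mult_ac)
  also have "\<dots> = 2*(2 * of_nat n+1) * A * ((of_nat n + 1) * B)^2 * ((of_nat k - of_nat i) * D)"
    unfolding f1 f2 f3 ..
  also have "\<dots> = (of_nat n + 1)^2 * ((2 * of_nat k - 2 * of_nat i) * (2 * of_nat k + 2 * of_nat i + 1) * aa k n)"
    unfolding a0 nn by (simp only: power2_eq_square) (simp add: algebra_simps)
  finally have "(of_nat n + 1)^2 * ((of_nat i + 1)^2 * aa k (Suc n)) = (of_nat n + 1)^2 * ((2 * of_nat k - 2 * of_nat i) * (2 * of_nat k + 2 * of_nat i + 1) * aa k n)" .
  hence "(of_nat i + 1)^2 * aa k (Suc n) = (2 * of_nat k - 2 * of_nat i) * (2 * of_nat k + 2 * of_nat i + 1) * aa k n"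
    using nz by (simp only: mult_cancel_left) blast
  thus ?thesis unfolding n_def .
qed

lemma main_coeff:
  assumes "i \<le> k"
  shows "4^k * aa k (k+i) = of_nat (((2*k) choose k)^2) * 4^i * SS k i"
  using assms
proof (induction "k - i" arbitrary: i)
  case 0
  then have ik: "i = k" by simp
  have "SS k k = bb k 0"
  proof -
    have "SS k k = (\<Sum>j\<in>{0}. bb k j * of_nat ((k - j) choose k))"
      unfolding SS_def by (rule sum.mono_neutral_right) (auto simp: binomial_eq_0)
    then show ?thesis by simp
  qed
  have kk: "k + i = 2*k" using ik by simp
  have "aa k (2*k) = of_nat ((2*(2*k)) choose (2*k)) * of_nat (((2*k) choose k)^2)"
    unfolding aa_def by simp
  moreover have "bb k 0 = of_nat ((2*(2*k)) choose (2*k))" unfolding bb_def by simp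
  ultimately show ?case unfolding kk using \<open>SS k k = bb k 0\<close> ik by simp
next
  case (Suc d)
  then have ik: "i < k" by simp
  have IH: "4^k * aa k (Suc (k + i)) = of_nat (((2*k) choose k)^2) * 4^Suc i * SS k (Suc i)"
    using Suc.hyps(1)[of "Suc i"] Suc.hyps(2) ik by simp
  define r :: complex where "r = (2 * of_nat k - 2 * of_nat i) * (2 * of_nat k + 2 * of_nat i + 1)"
  have rnz: "r \<noteq> 0"
  proof -
    have "(2 * of_nat k - 2 * of_nat i :: complex) = of_nat (2*k - 2*i)" using ik by (simp add: of_nat_diff)
    moreover have "(2 * of_nat k + 2 * of_nat i + 1 :: complex) = of_nat (2*k + 2*i + 1)" by simp
    ultimately have "r = of_nat ((2*k - 2*i) * (2*k + 2*i + 1))" unfolding r_def by (simp only: of_nat_mult)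
    moreover have "(2*k - 2*i) * (2*k + 2*i + 1) \<noteq> 0" using ik by simp
    ultimately show ?thesis by (simp only: of_nat_eq_0_iff) simp
  qed
  define C2 where "C2 = (of_nat (((2*k) choose k)^2) :: complex)"
  define X where "X = aa k (k+i)"
  define X1 where "X1 = aa k (Suc (k+i))"
  define Y where "Y = SS k i"
  define Y1 where "Y1 = SS k (Suc i)"
  define q :: complex where "q = of_nat i + 1"
  have e1: "q^2 * X1 = r * X" using arec[OF ik] unfolding r_def X_def X1_def q_def by simp
  have e2: "4 * q^2 * Y1 = r * Y" using SSrec[of i k] unfolding r_def Y_def Y1_def q_def by simp
  have e3: "4^k * X1 = C2 * (4 * 4^i) * Y1" using IH unfolding C2_def X1_def Y1_def by simp
  have "r * (4^k * X) = 4^k * (q^2 * X1)" unfolding e1 by simp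
  also have "\<dots> = q^2 * (4^k * X1)" by simp
  also have "\<dots> = C2 * 4^i * (4 * q^2 * Y1)" unfolding e3 by simp
  also have "\<dots> = r * (C2 * 4^i * Y)" unfolding e2 by simp
  finally have "r * (4^k * X) = r * (C2 * 4^i * Y)" .
  hence "4^k * X = C2 * 4^i * Y" using rnz by simp
  thus ?case unfolding X_def C2_def Y_def .
qed

lemma binexp:
  assumes "p \<le> k"
  shows "(1 + 4*t)^p = (\<Sum>i\<le>k. of_nat (p choose i) * (4*t)^i :: complex)"
proof -
  have "(1 + 4*t)^p = (4*t + 1)^p" by (simp add: add.commute)
  also have "\<dots> = (\<Sum>i\<le>p. of_nat (p choose i) * (4*t)^i)" by (simp add: binomial_ring)
  also have "\<dots> = (\<Sum>i\<le>k. of_nat (p choose i) * (4*t)^i)"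
    by (rule sum.mono_neutral_left) (use assms in \<open>auto simp: binomial_eq_0\<close>)
  finally show ?thesis .
qed

lemma poly_id:
  "(\<Sum>i\<le>k. aa k (k+i) * t^(k+i)) = t^k * of_nat (((2*k) choose k)^2) * (\<Sum>j\<le>k. bb k j * (1 + 4*t)^(k-j)) / 4^k"
proof -
  have "(\<Sum>j\<le>k. bb k j * (1 + 4*t)^(k-j)) = (\<Sum>j\<le>k. \<Sum>i\<le>k. bb k j * of_nat ((k-j) choose i) * (4*t)^i)"
  proof (intro sum.cong refl)
    fix j assume "j \<in> {..k}"
    hence "k - j \<le> k" by simp
    show "bb k j * (1 + 4*t)^(k-j) = (\<Sum>i\<le>k. bb k j * of_nat ((k-j) choose i) * (4*t)^i)"
      unfolding binexp[OF \<open>k - j \<le> k\<close>] sum_distrib_left by (simp only: mult.assoc)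
  qed
  also have "\<dots> = (\<Sum>i\<le>k. \<Sum>j\<le>k. bb k j * of_nat ((k-j) choose i) * (4*t)^i)" by (rule sum.swap)
  also have "\<dots> = (\<Sum>i\<le>k. (4*t)^i * SS k i)"
    unfolding SS_def sum_distrib_left by (intro sum.cong refl) (simp add: mult.commute)
  finally have e: "(\<Sum>j\<le>k. bb k j * (1 + 4*t)^(k-j)) = (\<Sum>i\<le>k. (4*t)^i * SS k i)" .
  have "t^k * of_nat (((2*k) choose k)^2) * (\<Sum>i\<le>k. (4*t)^i * SS k i) / 4^k
      = (\<Sum>i\<le>k. t^(k+i) * (of_nat (((2*k) choose k)^2) * 4^i * SS k i) / 4^k)"
    by (simp add: sum_distrib_left sum_divide_distrib power_add power_mult_distrib algebra_simps)
  also have "\<dots> = (\<Sum>i\<le>k. aa k (k+i) * t^(k+i))"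
  proof (intro sum.cong refl)
    fix i assume "i \<in> {..k}"
    hence "of_nat (((2*k) choose k)^2) * 4^i * SS k i = 4^k * aa k (k+i)" using main_coeff[of i k] by simp
    thus "t^(k+i) * (of_nat (((2*k) choose k)^2) * 4^i * SS k i) / 4^k = aa k (k+i) * t^(k+i)" by simp
  qed
  finally show ?thesis unfolding e by simp
qed

lemma leg_eq:
  "legendreP (2*k) (csqrt w) = (\<Sum>j\<le>k. bb k j * w^(k-j)) / 4^k"
proof -
  have p: "csqrt w ^ (2*k - 2*j) = w^(k-j)" for j
  proof -
    have "2*k - 2*j = 2*(k-j)" by simp
    hence "csqrt w ^ (2*k - 2*j) = ((csqrt w)^2)^(k-j)" by (simp only: power_mult)
    thus ?thesis by simp
  qed
  have f: "(2::complex)^(2*k) = 4^k" by (simp add: power_mult)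
  show ?thesis unfolding legendreP_def bb_def p f by simp
qed

lemma colsum:
  assumes "y \<noteq> 0"
  shows "(\<Sum>i\<le>k. A_term x y (k+i) k) = (-x*y)^k * of_nat (((2*k) choose k)^2) * legendreP (2*k) (csqrt (1 + 4*x/y))"
proof -
  define t where "t = x / y"
  have xt: "x = t * y" unfolding t_def using assms by simp
  have tm: "A_term x y (k+i) k = (-1)^k * y^(2*k) * (aa k (k+i) * t^(k+i))" if "i \<in> {..k}" for i
  proof -
    have ik: "i \<le> k" using that by simp
    have ex: "2 * int k - int (k+i) = int (k - i)" using ik by simp
    have yy: "y^(k+i) * y^(k-i) = y^(2*k)" using ik by (simp add: power_add[symmetric] mult_2)
    have "A_term x y (k+i) k = aa k (k+i) * (-1)^k * (t^(k+i) * (y^(k+i) * y^(k-i)))"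
      unfolding A_term_def aa_def ex power_int_of_nat xt by (simp add: power_mult_distrib algebra_simps)
    thus ?thesis unfolding yy by simp
  qed
  have "(\<Sum>i\<le>k. A_term x y (k+i) k) = (-1)^k * y^(2*k) * (\<Sum>i\<le>k. aa k (k+i) * t^(k+i))"
    using tm by (simp add: sum_distrib_left)
  also have "\<dots> = (-1)^k * y^(2*k) * (t^k * of_nat (((2*k) choose k)^2) * (\<Sum>j\<le>k. bb k j * (1 + 4*t)^(k-j)) / 4^k)"
    unfolding poly_id ..
  also have "\<dots> = (-x*y)^k * of_nat (((2*k) choose k)^2) * legendreP (2*k) (csqrt (1 + 4*x/y))"
  proof -
    have w: "1 + 4*x/y = 1 + 4*t" unfolding t_def by simp
    have "-x*y = (-1) * t * y * y" unfolding xt by simp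
    hence "(-x*y)^k = (-1)^k * t^k * y^k * y^k" by (simp only: power_mult_distrib)
    moreover have "y^(2*k) = y^k * y^k" by (simp only: mult_2 power_add)
    ultimately have pm: "(-x*y)^k = (-1)^k * t^k * y^(2*k)" by (simp only: mult_ac)
    show ?thesis unfolding w leg_eq pm by (simp add: mult_ac)
  qed
  finally show ?thesis .
qed

theorem proposition2p1:
  fixes x y :: complex
  assumes "y \<noteq> 0"
    and "(\<lambda>(n, k). norm (A_term x y n k)) summable_on {(n, k). k \<le> n}"
  shows "(\<lambda>k. (- x * y) ^ k * of_nat (((2*k) choose k)^2) * legendreP (2*k) (csqrt (1 + 4 * x / y)))
           sums A_fun x y"
proof -
  define f where "f = (\<lambda>p. A_term x y (fst p) (snd p))"
  define S where "S = {(n, k). k \<le> (n::nat)}"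
  have "(\<lambda>p. norm (f p)) summable_on S"
    using assms(2) unfolding f_def S_def by (simp add: case_prod_beta')
  hence "f summable_on S" by (rule abs_summable_summable)
  then obtain V where V: "(f has_sum V) S" using has_sum_infsum by blast
  have S1: "S = Sigma UNIV (\<lambda>n. {..n})" unfolding S_def by auto
  have "((\<lambda>n. \<Sum>k\<le>n. A_term x y n k) has_sum V) UNIV"
    by (rule has_sum_Sigma'[OF V[unfolded S1]]) (simp add: f_def)
  hence "(\<lambda>n. \<Sum>k\<le>n. A_term x y n k) sums V" by (rule has_sum_imp_sums)
  hence AV: "A_fun x y = V" unfolding A_fun_def by (rule sums_unique[symmetric])
  have S2: "S = prod.swap ` Sigma UNIV (\<lambda>k. {n. k \<le> n})" unfolding S_def by auto
  have "((f \<circ> prod.swap) has_sum V) (Sigma UNIV (\<lambda>k. {n. k \<le> n}))"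
    using V unfolding S2 by (subst (asm) has_sum_reindex) auto
  moreover have "((\<lambda>n. (f \<circ> prod.swap) (k, n)) has_sum (\<Sum>i\<le>k. A_term x y (k+i) k)) {n. k \<le> n}" for k
  proof (rule has_sum_finite_neutralI[where B="(\<lambda>i. k+i) ` {..k}"])
    show "finite ((\<lambda>i. k+i) ` {..k})" by simp
    show "(\<lambda>i. k+i) ` {..k} \<subseteq> {n. k \<le> n}" by auto
    show "(f \<circ> prod.swap) (k, n) = 0" if "n \<in> {n. k \<le> n} - (\<lambda>i. k+i) ` {..k}" for n
    proof -
      have "2*k < n"
      proof (rule ccontr)
        assume "\<not> 2*k < n"
        hence "n = k + (n - k)" "n - k \<in> {..k}" using that by auto
        thus False using that by blast
      qed
      thus ?thesis unfolding f_def A_term_def by (simp add: binomial_eq_0)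
    qed
    show "(\<Sum>i\<le>k. A_term x y (k+i) k) = (\<Sum>n\<in>(\<lambda>i. k+i) ` {..k}. (f \<circ> prod.swap) (k, n))"
      by (subst sum.reindex) (auto simp: f_def)
  qed
  ultimately have "((\<lambda>k. \<Sum>i\<le>k. A_term x y (k+i) k) has_sum V) UNIV"
    by (rule has_sum_Sigma')
  hence "(\<lambda>k. \<Sum>i\<le>k. A_term x y (k+i) k) sums V" by (rule has_sum_imp_sums)
  thus ?thesis unfolding AV colsum[OF assms(1)] .
qed

end
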